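(* Let $d\ge 1$, $\lambda>0$, $\delta>0$, and let $f:\mathbb{R}^d\to\mathbb{R}$ satisfy: (A1) $f$ is continuous and has at least one minimizer; (A2) $\int_{\mathbb{R}^d}\exp(-f(y)/\delta)\,dy<+\infty$. Then the zeroth-order proximal operator $\operatorname{zprox}^\delta_{\lambda,f}$ is $C^\infty$ and bijective, and \[ \operatorname{zprox}^\delta_{\lambda,f}=\operatorname{prox}_{\lambda\delta H_{\lambda,\delta}}, \] where $H_{\lambda,\delta}:\mathbb{R}^d\to\mathbb{R}$ is defined by \[ H_{\lambda,\delta}(x)=-\frac{1}{2\lambda\delta}\big\|(\operatorname{zprox}^\delta_{\lambda,f})^{-1}(x)-x\big\|^2+\frac{1}{\delta}f^{\lambda,\delta}\big((\operatorname{zprox}^\delta_{\lambda,f})^{-1}(x)\big). \] In particular, the sequence $(x^k)_{k\in\mathbb{N}}$ generated by ZOPPA is a proximal point iteration, i.e. $x^{k+1}=\operatorname{prox}_{\lambda\delta H_{\lambda,\delta}}(x^k)$ for all $k$.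
   Context: The zeroth-order proximal operator is $\operatorname{zprox}^\delta_{\lambda,f}(x)=\dfrac{\mathbb{E}_{y\sim\mathcal N(x,\lambda\delta I)}[y\exp(-f(y)/\delta)]}{\mathbb{E}_{y\sim\mathcal N(x,\lambda\delta I)}[\exp(-f(y)/\delta)]}$, and the soft Moreau envelope is $f^{\lambda,\delta}(x)=-\delta\log\mathbb{E}_{y\sim\mathcal N(x,\lambda\delta I)}[\exp(-f(y)/\delta)]$. For a function $g:\mathbb{R}^d\to\mathbb{R}$ and $t>0$, $\operatorname{prox}_{tg}(x)=\operatorname{argmin}_{y\in\mathbb{R}^d}\{t\,g(y)+\tfrac12\|y-x\|^2\}$. ZOPPA (Zeroth-Order Proximal Point Algorithm): given $x^0\in\mathbb{R}^d$, iterate $x^{k+1}=\operatorname{zprox}^\delta_{\lambda,f}(x^k)$ for $k\ge 0$. *)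

theory Defs
  imports "HOL-Analysis.Analysis"
begin

definition gauss_density :: "real \<Rightarrow> 'a::euclidean_space \<Rightarrow> 'a \<Rightarrow> real" where
  "gauss_density s x y =
     (2 * pi * s) powr (- real DIM('a) / 2) * exp (- (norm (y - x))\<^sup>2 / (2 * s))"

definition zprox :: "real \<Rightarrow> real \<Rightarrow> ('a::euclidean_space \<Rightarrow> real) \<Rightarrow> 'a \<Rightarrow> 'a" where
  "zprox lam \<delta> f x =
     (1 / (\<integral> y. gauss_density (lam * \<delta>) x y * exp (- f y / \<delta>) \<partial>lborel)) *\<^sub>R
     (\<integral> y. (gauss_density (lam * \<delta>) x y * exp (- f y / \<delta>)) *\<^sub>R y \<partial>lborel)"

definition soft_moreau :: "real \<Rightarrow> real \<Rightarrow> ('a::euclidean_space \<Rightarrow> real) \<Rightarrow> 'a \<Rightarrow> real" where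
  "soft_moreau lam \<delta> f x =
     - \<delta> * ln (\<integral> y. gauss_density (lam * \<delta>) x y * exp (- f y / \<delta>) \<partial>lborel)"

text \<open>The set of minimizers of t g(y) + 1/2 |y - x|^2; prox_{tg}(x) = p means this set is {p}.\<close>
definition prox_set :: "('a::real_normed_vector \<Rightarrow> real) \<Rightarrow> real \<Rightarrow> 'a \<Rightarrow> 'a set" where
  "prox_set g t x = {p. \<forall>y. t * g p + (norm (p - x))\<^sup>2 / 2 \<le> t * g y + (norm (y - x))\<^sup>2 / 2}"

inductive_set iter_derivs :: "('a::real_normed_vector \<Rightarrow> 'b::real_normed_vector) \<Rightarrow> ('a \<Rightarrow> 'b) set"
  for f where
  base: "f \<in> iter_derivs f"
| step: "g \<in> iter_derivs f \<Longrightarrow> (\<forall>x. g differentiable (at x)) \<Longrightarrow>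
         (\<lambda>x. frechet_derivative g (at x) v) \<in> iter_derivs f"

definition C_infinity :: "('a::real_normed_vector \<Rightarrow> 'b::real_normed_vector) \<Rightarrow> bool" where
  "C_infinity f \<longleftrightarrow> (\<forall>g \<in> iter_derivs f. \<forall>x. g differentiable (at x))"

definition H_fun :: "real \<Rightarrow> real \<Rightarrow> ('a::euclidean_space \<Rightarrow> real) \<Rightarrow> 'a \<Rightarrow> real" where
  "H_fun lam \<delta> f x =
     - (norm (inv (zprox lam \<delta> f) x - x))\<^sup>2 / (2 * lam * \<delta>)
     + soft_moreau lam \<delta> f (inv (zprox lam \<delta> f) x) / \<delta>"

end

theory Submission
  imports Defs
begin

lemma cont_AE_zero:
  fixes g :: "'a::euclidean_space \<Rightarrow> real"
  assumes "continuous_on UNIV g" "AE y in lborel. g y = 0"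
  shows "g x = 0"
proof (rule ccontr)
  assume ne: "g x \<noteq> 0"
  have op: "open {y. g y \<noteq> 0}"
    using assms(1) by (intro open_Collect_neq) (auto simp: continuous_on_eq_continuous_at)
  obtain r where r: "r > 0" "ball x r \<subseteq> {y. g y \<noteq> 0}"
    using openE[OF op, of x] ne by blast
  from assms(2) obtain N where N: "{y \<in> space lborel. \<not> g y = 0} \<subseteq> N" "N \<in> null_sets lborel"
    by (auto elim!: AE_E simp: null_sets_def)
  have "ball x r \<subseteq> N" using N(1) r(2) by auto
  then have "emeasure lborel (ball x r) \<le> emeasure lborel N"
    by (intro emeasure_mono) (use N in auto)
  then have "emeasure lborel (ball x r) = 0" using N by auto
  then have "measure lborel (ball x r) = 0" by (simp add: measure_def)
  with content_ball_pos[OF r(1)] show False by simp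
qed
lemma dc_at0:
  fixes k :: "'a::euclidean_space \<Rightarrow> 'b \<Rightarrow> real"
  assumes meas: "\<And>h. k h \<in> borel_measurable M"
    and w: "integrable M w"
    and lim: "\<And>y. y \<in> space M \<Longrightarrow> ((\<lambda>h. k h y) \<longlongrightarrow> 0) (at 0)"
    and bnd: "\<And>h y. h \<noteq> 0 \<Longrightarrow> norm h < 1 \<Longrightarrow> y \<in> space M \<Longrightarrow> \<bar>k h y\<bar> \<le> w y"
  shows "((\<lambda>h. \<integral>y. k h y \<partial>M) \<longlongrightarrow> 0) (at 0)"
proof (subst tendsto_at_iff_sequentially, intro allI impI)
  fix X :: "nat \<Rightarrow> 'a" assume X: "\<forall>i. X i \<in> UNIV - {0}" "X \<longlonglongrightarrow> 0"
  then obtain N where N: "\<And>n. n \<ge> N \<Longrightarrow> norm (X n) < 1"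
  proof -
    from LIMSEQ_D[OF X(2), of 1] obtain N where "\<forall>n\<ge>N. norm (X n - 0) < 1" by auto
    then show ?thesis using that by auto
  qed
  have "(\<lambda>n. \<integral>y. k (X (n + N)) y \<partial>M) \<longlonglongrightarrow> (\<integral>y. 0 \<partial>M)"
  proof (rule integral_dominated_convergence[where w=w])
    show "AE y in M. norm (k (X (n + N)) y) \<le> w y" for n
    proof (rule AE_I2)
      fix y assume y: "y \<in> space M"
      have "X (n+N) \<in> UNIV - {0}" using X(1) by (rule spec)
      then have 1: "X (n+N) \<noteq> 0" by blast
      have 2: "norm (X (n+N)) < 1" using N[of "n+N"] by simp
      have "\<bar>k (X (n + N)) y\<bar> \<le> w y" by (rule bnd[OF 1 2 y])
      then show "norm (k (X (n + N)) y) \<le> w y" by (simp only: real_norm_def)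
    qed
    show "AE y in M. (\<lambda>n. k (X (n + N)) y) \<longlonglongrightarrow> 0"
    proof (rule AE_I2)
      fix y assume y: "y \<in> space M"
      have "(\<lambda>n. k (X n) y) \<longlonglongrightarrow> 0"
        using lim[OF y] X unfolding tendsto_at_iff_sequentially by (auto simp: comp_def)
      then show "(\<lambda>n. k (X (n + N)) y) \<longlonglongrightarrow> 0" by (rule LIMSEQ_ignore_initial_segment)
    qed
  qed (auto simp: meas w)
  then have "(\<lambda>n. \<integral>y. k (X (n + N)) y \<partial>M) \<longlonglongrightarrow> 0" by simp
  then show "((\<lambda>h. \<integral>y. k h y \<partial>M) \<circ> X) \<longlonglongrightarrow> 0"
    unfolding comp_def by (rule LIMSEQ_offset)
qed

lemma mvt_bound_line:
  fixes k :: "'a::euclidean_space \<Rightarrow> real"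
  assumes der: "\<And>z. (k has_derivative (\<lambda>h. D z \<bullet> h)) (at z)"
    and bnd: "\<And>t. 0 \<le> t \<Longrightarrow> t \<le> 1 \<Longrightarrow> norm (D (x + t *\<^sub>R h)) \<le> B"
  shows "\<bar>k (x + h) - k x\<bar> \<le> B * norm h"
proof -
  define \<phi> where "\<phi> t = k (x + t *\<^sub>R h)" for t :: real
  have d\<phi>: "(\<phi> has_derivative (\<lambda>s. s * (D (x + t *\<^sub>R h) \<bullet> h))) (at t)" for t
  proof -
    have "((\<lambda>t. x + t *\<^sub>R h) has_derivative (\<lambda>s. s *\<^sub>R h)) (at t)"
      by (auto intro!: derivative_eq_intros)
    from has_derivative_compose[OF this der[of "x + t *\<^sub>R h"]]
    show ?thesis unfolding \<phi>_def by (simp add: o_def inner_scaleR_right)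
  qed
  have cont: "continuous_on {0..1} \<phi>"
    using d\<phi> by (meson has_derivative_continuous continuous_at_imp_continuous_on)
  obtain t where t: "t \<in> {0<..<1}" "norm (\<phi> 1 - \<phi> 0) \<le> norm ((1 - 0) * (D (x + t *\<^sub>R h) \<bullet> h))"
    using mvt_general[of 0 1 \<phi>, OF _ cont d\<phi>] by auto
  have "\<bar>D (x + t *\<^sub>R h) \<bullet> h\<bar> \<le> norm (D (x + t *\<^sub>R h)) * norm h"
    by (rule Cauchy_Schwarz_ineq2)
  also have "\<dots> \<le> B * norm h"
    using bnd[of t] t(1) by (intro mult_right_mono) auto
  finally show ?thesis using t(2) unfolding \<phi>_def by simp
qed

lemma deriv_under_int:
  fixes k :: "'a::euclidean_space \<Rightarrow> 'b \<Rightarrow> real" and Dk :: "'a \<Rightarrow> 'b \<Rightarrow> 'a"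
  assumes int: "\<And>z. integrable M (k z)"
    and Dmeas: "Dk x \<in> borel_measurable M"
    and der: "\<And>z y. y \<in> space M \<Longrightarrow> ((\<lambda>z. k z y) has_derivative (\<lambda>h. Dk z y \<bullet> h)) (at z)"
    and w: "integrable M w"
    and bnd: "\<And>z y. z \<in> cball x 1 \<Longrightarrow> y \<in> space M \<Longrightarrow> norm (Dk z y) \<le> w y"
  shows "((\<lambda>z. \<integral>y. k z y \<partial>M) has_derivative (\<lambda>h. (\<integral>y. Dk x y \<partial>M) \<bullet> h)) (at x)"
proof -
  have intD: "integrable M (Dk x)"
  proof (rule Bochner_Integration.integrable_bound[OF w Dmeas])
    show "AE y in M. norm (Dk x y) \<le> norm (w y)"
    proof (rule AE_I2)
      fix y assume "y \<in> space M"
      then have "norm (Dk x y) \<le> w y" using bnd[of x y] by simp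
      then show "norm (Dk x y) \<le> norm (w y)" by simp
    qed
  qed
  define r where "r h y = (k (x + h) y - k x y - Dk x y \<bullet> h) / norm h" for h y
  have intr: "(\<integral>y. r h y \<partial>M) = ((\<integral>y. k (x+h) y \<partial>M) - (\<integral>y. k x y \<partial>M) - (\<integral>y. Dk x y \<partial>M) \<bullet> h) / norm h" for h
  proof -
    have "(\<integral>y. r h y \<partial>M) = (\<integral>y. (k (x + h) y - k x y - Dk x y \<bullet> h) \<partial>M) / norm h"
      unfolding r_def by simp
    also have "(\<integral>y. (k (x + h) y - k x y - Dk x y \<bullet> h) \<partial>M)
       = (\<integral>y. k (x+h) y \<partial>M) - (\<integral>y. k x y \<partial>M) - (\<integral>y. Dk x y \<bullet> h \<partial>M)"
      using int intD by (simp add: integral_diff)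
    also have "(\<integral>y. Dk x y \<bullet> h \<partial>M) = (\<integral>y. Dk x y \<partial>M) \<bullet> h"
      using intD by simp
    finally show ?thesis .
  qed
  have lim: "((\<lambda>h. \<integral>y. r h y \<partial>M) \<longlongrightarrow> 0) (at 0)"
  proof (rule dc_at0[where w="\<lambda>y. 2 * w y"])
    show "r h \<in> borel_measurable M" for h
      unfolding r_def using int intD
      by (intro borel_measurable_divide borel_measurable_diff borel_measurable_inner borel_measurable_const)
         (auto intro: borel_measurable_integrable)
    show "integrable M (\<lambda>y. 2 * w y)" using w by simp
    show "((\<lambda>h. r h y) \<longlongrightarrow> 0) (at 0)" if y: "y \<in> space M" for y
    proof -
      have "((\<lambda>z. k z y) has_derivative (\<lambda>h. Dk x y \<bullet> h)) (at x)" using der[OF y] .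
      then have "((\<lambda>h. norm (k (x + h) y - k x y - Dk x y \<bullet> h) / norm h) \<longlongrightarrow> 0) (at 0)"
        unfolding has_derivative_at by simp
      then have "((\<lambda>h. \<bar>r h y\<bar>) \<longlongrightarrow> 0) (at 0)"
        unfolding r_def by (simp add: abs_divide)
      then show ?thesis by (simp add: tendsto_rabs_zero_iff)
    qed
    show "\<bar>r h y\<bar> \<le> 2 * w y" if h: "h \<noteq> 0" "norm h < 1" and y: "y \<in> space M" for h y
    proof -
      have a: "\<bar>k (x + h) y - k x y\<bar> \<le> w y * norm h"
      proof (rule mvt_bound_line[where D="\<lambda>z. Dk z y"])
        show "((\<lambda>z. k z y) has_derivative (\<lambda>h. Dk z y \<bullet> h)) (at z)" for z using der[OF y] .
        show "norm (Dk (x + t *\<^sub>R h) y) \<le> w y" if "0 \<le> t" "t \<le> 1" for t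
        proof (rule bnd[OF _ y])
          have "norm (t *\<^sub>R h) \<le> 1" using that h by (simp add: mult_le_one)
          then show "x + t *\<^sub>R h \<in> cball x 1" by (simp add: dist_norm)
        qed
      qed
      have b: "\<bar>Dk x y \<bullet> h\<bar> \<le> w y * norm h"
      proof -
        have "\<bar>Dk x y \<bullet> h\<bar> \<le> norm (Dk x y) * norm h" by (rule Cauchy_Schwarz_ineq2)
        also have "\<dots> \<le> w y * norm h" using bnd[of x y] y by (intro mult_right_mono) auto
        finally show ?thesis .
      qed
      have c: "\<bar>k (x + h) y - k x y - Dk x y \<bullet> h\<bar> \<le> 2 * w y * norm h"
        using a b by linarith
      have "norm h > 0" using h by simp
      then show ?thesis unfolding r_def using c by (simp add: abs_divide divide_le_eq)
    qed
  qed
  show ?thesis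
    unfolding has_derivative_at
  proof
    show "bounded_linear (\<lambda>h. (\<integral>y. Dk x y \<partial>M) \<bullet> h)" by (rule bounded_linear_inner_right)
    have "((\<lambda>h. \<bar>\<integral>y. r h y \<partial>M\<bar>) \<longlongrightarrow> 0) (at 0)"
      using lim by (simp add: tendsto_rabs_zero_iff)
    then show "((\<lambda>h. norm ((\<integral>y. k (x + h) y \<partial>M) - (\<integral>y. k x y \<partial>M) - (\<integral>y. Dk x y \<partial>M) \<bullet> h) / norm h) \<longlongrightarrow> 0) (at 0)"
      unfolding intr by (simp add: abs_divide)
  qed
qed

lemma gauss_pos: "s > 0 \<Longrightarrow> gauss_density s x y > 0"
  unfolding gauss_density_def by simp

lemma gauss_deriv:
  assumes "s > 0"
  shows "((\<lambda>z. gauss_density s z y) has_derivative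
           (\<lambda>h. ((gauss_density s z y / s) *\<^sub>R (y - z)) \<bullet> h)) (at z)"
proof -
  have e: "(\<lambda>z. gauss_density s z y) = (\<lambda>z. (2 * pi * s) powr (- real DIM('a) / 2) * exp (- ((y - z) \<bullet> (y - z)) / (2 * s)))"
    by (simp add: gauss_density_def power2_norm_eq_inner mult.assoc)
  have "((\<lambda>z. - ((y - z) \<bullet> (y - z)) / (2 * s)) has_derivative (\<lambda>h. ((y - z) \<bullet> h) / s)) (at z)"
  proof -
    have "((\<lambda>z. (y - z) \<bullet> (y - z)) has_derivative (\<lambda>h. (- h) \<bullet> (y - z) + (y - z) \<bullet> (- h))) (at z)"
      by (auto intro!: derivative_eq_intros simp: inner_commute)
    from has_derivative_mult_right[OF this, of "(- 1) / (2 * s)"]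
    have "((\<lambda>z. - ((y - z) \<bullet> (y - z)) / (2 * s)) has_derivative (\<lambda>h. ((- 1) / (2 * s)) * ((- h) \<bullet> (y - z) + (y - z) \<bullet> (- h)))) (at z)"
      by (simp add: field_simps)
    moreover have "(\<lambda>h. ((- 1) / (2 * s)) * ((- h) \<bullet> (y - z) + (y - z) \<bullet> (- h))) = (\<lambda>h. ((y - z) \<bullet> h) / s)"
      using assms by (auto simp: inner_commute field_simps)
    ultimately show ?thesis by simp
  qed
  from has_derivative_exp[OF this]
  have "((\<lambda>z. exp (- ((y - z) \<bullet> (y - z)) / (2 * s))) has_derivative (\<lambda>h. exp (- ((y - z) \<bullet> (y - z)) / (2 * s)) * (((y - z) \<bullet> h) / s))) (at z)"
    by (simp add: mult.commute)
  from has_derivative_mult_right[OF this, of "(2 * pi * s) powr (- real DIM('a) / 2)"]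
  have "((\<lambda>z. (2 * pi * s) powr (- real DIM('a) / 2) * exp (- ((y - z) \<bullet> (y - z)) / (2 * s))) has_derivative
     (\<lambda>h. (2 * pi * s) powr (- real DIM('a) / 2) * (exp (- ((y - z) \<bullet> (y - z)) / (2 * s)) * (((y - z) \<bullet> h) / s)))) (at z)" .
  moreover have "(\<lambda>h. (2 * pi * s) powr (- real DIM('a) / 2) * (exp (- ((y - z) \<bullet> (y - z)) / (2 * s)) * (((y - z) \<bullet> h) / s)))
     = (\<lambda>h. ((gauss_density s z y / s) *\<^sub>R (y - z)) \<bullet> h)"
    by (simp add: gauss_density_def power2_norm_eq_inner mult.assoc)
  ultimately show ?thesis unfolding e by simp
qed

lemma gauss_quad_bound:
  fixes s t b :: real
  assumes "s > 0"
  shows "exp (- t\<^sup>2 / (2 * s)) * exp (b * t) \<le> exp (b\<^sup>2 * s / 2)"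
proof -
  have "- t\<^sup>2 / (2 * s) + b * t \<le> b\<^sup>2 * s / 2"
  proof -
    have "b\<^sup>2 * s / 2 - (- t\<^sup>2 / (2 * s) + b * t) = (t - b * s)\<^sup>2 / (2 * s)"
      using assms by (simp add: field_simps power2_eq_square)
    moreover have "(t - b * s)\<^sup>2 / (2 * s) \<ge> 0" using assms by simp
    ultimately show ?thesis by linarith
  qed
  then show ?thesis by (simp add: exp_add[symmetric])
qed

lemma gauss_exp_bound:
  assumes "s > 0" "a \<ge> 0" "norm z \<le> R"
  shows "exp (- (norm (y - z))\<^sup>2 / (2 * s)) * exp (a * norm y) \<le> exp (a * R + a\<^sup>2 * s / 2)"
proof -
  have "norm y \<le> R + norm (y - z)"
    using assms(3) norm_triangle_ineq[of z "y - z"] by simp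
  then have "exp (a * norm y) \<le> exp (a * R) * exp (a * norm (y - z))"
    using assms(2) by (simp add: exp_add[symmetric] mult_left_mono distrib_left[symmetric])
  then have "exp (- (norm (y - z))\<^sup>2 / (2 * s)) * exp (a * norm y)
     \<le> exp (- (norm (y - z))\<^sup>2 / (2 * s)) * (exp (a * R) * exp (a * norm (y - z)))"
    by (intro mult_left_mono) auto
  also have "\<dots> = exp (a * R) * (exp (- (norm (y - z))\<^sup>2 / (2 * s)) * exp (a * norm (y - z)))"
    by simp
  also have "\<dots> \<le> exp (a * R) * exp (a\<^sup>2 * s / 2)"
    by (intro mult_left_mono gauss_quad_bound assms) auto
  finally show ?thesis by (simp add: exp_add)
qed

definition tame :: "('a::real_normed_vector \<Rightarrow> 'b::real_normed_vector) \<Rightarrow> bool" where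
  "tame p \<longleftrightarrow> continuous_on UNIV p \<and> (\<exists>C a. a \<ge> 0 \<and> (\<forall>y. norm (p y) \<le> C * exp (a * norm y)))"

lemma norm_le_exp: "norm (y::'a::real_normed_vector) \<le> exp (norm y)"
  using exp_ge_add_one_self[of "norm y"] by linarith

lemma tame_const: "tame (\<lambda>y. c)"
proof -
  have "\<forall>y. norm c \<le> norm c * exp (0 * norm (y::'a))" by simp
  then show ?thesis unfolding tame_def by (intro conjI continuous_on_const) blast+
qed

lemma tame_id: "tame (\<lambda>y. y)"
  unfolding tame_def by (auto intro!: exI[of _ 1] exI[of _ 1] norm_le_exp)

lemma tame_mult_lin:
  fixes p :: "'a::euclidean_space \<Rightarrow> real"
  assumes "tame p"
  shows "tame (\<lambda>y. p y *\<^sub>R (y - c))"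
proof -
  from assms obtain C a where Ca: "a \<ge> 0" "\<And>y. norm (p y) \<le> C * exp (a * norm y)" and cp: "continuous_on UNIV p"
    unfolding tame_def by auto
  have "norm (p y *\<^sub>R (y - c)) \<le> (C * (1 + norm c)) * exp ((a + 1) * norm y)" for y
  proof -
    have C0: "C \<ge> 0" using Ca(2)[of y] by (smt (verit) exp_gt_zero norm_ge_zero zero_le_mult_iff)
    have "norm (y - c) \<le> norm y + norm c" by (rule norm_triangle_ineq4)
    also have "\<dots> \<le> (1 + norm c) * exp (norm y)"
      using norm_le_exp[of y] one_le_exp_iff[of "norm y"]
      by (smt (verit, best) mult_le_cancel_left1 norm_ge_zero ring_class.ring_distribs(2) mult.commute)
    finally have 1: "norm (y - c) \<le> (1 + norm c) * exp (norm y)" .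
    have "norm (p y *\<^sub>R (y - c)) = norm (p y) * norm (y - c)" by simp
    also have "\<dots> \<le> (C * exp (a * norm y)) * ((1 + norm c) * exp (norm y))"
      using C0 by (intro mult_mono Ca(2) 1) auto
    also have "\<dots> = (C * (1 + norm c)) * exp ((a + 1) * norm y)"
      by (simp add: algebra_simps exp_add)
    finally show ?thesis .
  qed
  moreover have "continuous_on UNIV (\<lambda>y. p y *\<^sub>R (y - c))"
    by (intro continuous_intros cp)
  ultimately show ?thesis unfolding tame_def using Ca(1)
    by (intro conjI exI[of _ "C * (1 + norm c)"] exI[of _ "a + 1"]) auto
qed

lemma tame_inner:
  assumes "tame q"
  shows "tame (\<lambda>y. q y \<bullet> v)"
proof -
  from assms obtain C a where Ca: "a \<ge> 0" "\<And>y. norm (q y) \<le> C * exp (a * norm y)" and cp: "continuous_on UNIV q"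
    unfolding tame_def by auto
  have "norm (q y \<bullet> v) \<le> (C * norm v) * exp (a * norm y)" for y
  proof -
    have "norm (q y \<bullet> v) \<le> norm (q y) * norm v" using Cauchy_Schwarz_ineq2 by simp
    also have "\<dots> \<le> C * exp (a * norm y) * norm v" by (intro mult_right_mono Ca(2)) auto
    finally show ?thesis by (simp add: mult_ac)
  qed
  moreover have "continuous_on UNIV (\<lambda>y. q y \<bullet> v)" by (intro continuous_intros cp)
  ultimately show ?thesis unfolding tame_def using Ca(1) by blast
qed

lemma tame_scale:
  fixes p :: "'a::real_normed_vector \<Rightarrow> real"
  assumes "tame p" shows "tame (\<lambda>y. c * p y)"
proof -
  from assms obtain C a where Ca: "a \<ge> 0" "\<And>y. norm (p y) \<le> C * exp (a * norm y)" and cp: "continuous_on UNIV p"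
    unfolding tame_def by auto
  have "norm (c * p y) \<le> (\<bar>c\<bar> * C) * exp (a * norm y)" for y
    using mult_left_mono[OF Ca(2)[of y], of "\<bar>c\<bar>"] by (simp add: abs_mult mult.assoc)
  moreover have "continuous_on UNIV (\<lambda>y. c * p y)" by (intro continuous_intros cp)
  ultimately show ?thesis unfolding tame_def using Ca(1) by blast
qed

lemma tame_mult_inner:
  fixes p :: "'a::euclidean_space \<Rightarrow> real"
  assumes "tame p" shows "tame (\<lambda>y. p y * (y \<bullet> h))"
proof -
  have "tame (\<lambda>y. (p y *\<^sub>R (y - 0)) \<bullet> h)" by (intro tame_inner tame_mult_lin assms)
  then show ?thesis by simp
qed

lemma norm_diff_le_exp:
  fixes y z :: "'a::real_normed_vector"
  assumes "norm z \<le> R"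
  shows "norm (y - z) \<le> (1 + R) * exp (norm y)"
proof -
  have R0: "R \<ge> 0" using assms norm_ge_zero order_trans by blast
  have "norm (y - z) \<le> norm y + R" using norm_triangle_ineq4[of y z] assms by linarith
  also have "\<dots> \<le> exp (norm y) + R * exp (norm y)"
    using norm_le_exp[of y] one_le_exp_iff[of "norm y"] R0
    by (smt (verit) mult_le_cancel_left1 norm_ge_zero)
  finally show ?thesis by (simp add: algebra_simps)
qed

locale zp =
  fixes f :: "'a::euclidean_space \<Rightarrow> real" and lam \<delta> :: real
  assumes lam_pos: "lam > 0" and del_pos: "\<delta> > 0" and f_cont: "continuous_on UNIV f"
    and int_mu: "integrable lborel (\<lambda>y. exp (- f y / \<delta>))"
begin

abbreviation "s \<equiv> lam * \<delta>"

lemma s_pos: "s > 0" using lam_pos del_pos by simp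

definition mu :: "'a \<Rightarrow> real" where "mu y = exp (- f y / \<delta>)"

lemma mu_pos: "mu y > 0" unfolding mu_def by simp

lemma mu_cont: "continuous_on UNIV mu"
  unfolding mu_def using del_pos by (intro continuous_intros f_cont) auto

lemma int_mu': "integrable lborel mu"
  using int_mu unfolding mu_def by simp

definition wt :: "'a \<Rightarrow> 'a \<Rightarrow> real" where "wt x y = gauss_density s x y * mu y"

lemma wt_pos: "wt x y > 0"
  unfolding wt_def by (intro mult_pos_pos gauss_pos s_pos mu_pos)

lemma gauss_cont: "continuous_on UNIV (\<lambda>y. gauss_density s x y)"
  unfolding gauss_density_def using s_pos by (intro continuous_intros) auto

lemma wt_cont: "continuous_on UNIV (wt x)"
  unfolding wt_def[abs_def] by (intro continuous_intros gauss_cont mu_cont)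

lemma cg_pos: "gauss_density s (0::'a) 0 > 0" unfolding gauss_density_def using lam_pos del_pos by simp

lemma gauss_eq: "gauss_density s (x::'a) y = gauss_density s (0::'a) 0 * exp (- (norm (y - x))\<^sup>2 / (2 * s))"
  unfolding gauss_density_def by simp

lemma tame_wt_bound:
  assumes "norm z \<le> R" "a \<ge> 0"
  shows "wt z y * exp (a * norm y) \<le> gauss_density s (0::'a) 0 * exp (a * R + a\<^sup>2 * s / 2) * mu y"
proof -
  have "wt z y * exp (a * norm y) = gauss_density s (0::'a) 0 * mu y * (exp (- (norm (y - z))\<^sup>2 / (2 * s)) * exp (a * norm y))"
    unfolding wt_def by (subst gauss_eq[of z y]) simp
  also have "\<dots> \<le> gauss_density s (0::'a) 0 * mu y * exp (a * R + a\<^sup>2 * s / 2)"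
    using less_imp_le[OF mult_pos_pos[OF cg_pos mu_pos]] by (intro mult_left_mono gauss_exp_bound s_pos assms) auto
  finally show ?thesis by (simp only: mult_ac)
qed

lemma int_tame:
  fixes q :: "'a \<Rightarrow> 'b::{banach, second_countable_topology}"
  assumes "tame q"
  shows "integrable lborel (\<lambda>y. wt x y *\<^sub>R q y)"
proof -
  from assms obtain C a where Ca: "a \<ge> 0" "\<And>y. norm (q y) \<le> C * exp (a * norm y)" and cq: "continuous_on UNIV q"
    unfolding tame_def by auto
  define K where "K = C * (gauss_density s (0::'a) 0 * exp (a * norm x + a\<^sup>2 * s / 2))"
  show ?thesis
  proof (rule Bochner_Integration.integrable_bound)
    show "integrable lborel (\<lambda>y. K * mu y)" using int_mu' by simp
    show "(\<lambda>y. wt x y *\<^sub>R q y) \<in> borel_measurable lborel"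
      unfolding measurable_lborel2 by (intro borel_measurable_continuous_onI continuous_intros wt_cont cq) 
    show "AE y in lborel. norm (wt x y *\<^sub>R q y) \<le> norm (K * mu y)"
    proof (rule AE_I2)
      fix y
      have C0: "C \<ge> 0" using Ca(2)[of y] by (smt (verit) exp_gt_zero norm_ge_zero zero_le_mult_iff)
      have "norm (wt x y *\<^sub>R q y) = wt x y * norm (q y)" using wt_pos[of x y] by simp
      also have "\<dots> \<le> wt x y * (C * exp (a * norm y))"
        using wt_pos[of x y] by (intro mult_left_mono Ca(2)) auto
      also have "\<dots> = C * (wt x y * exp (a * norm y))" by simp
      also have "\<dots> \<le> C * (gauss_density s (0::'a) 0 * exp (a * norm x + a\<^sup>2 * s / 2) * mu y)"
        using C0 by (intro mult_left_mono tame_wt_bound Ca(1)) auto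
      also have "\<dots> = K * mu y" unfolding K_def by simp
      also have "\<dots> \<le> norm (K * mu y)" by simp
      finally show "norm (wt x y *\<^sub>R q y) \<le> norm (K * mu y)" .
    qed
  qed
qed

lemma int_tame_real:
  fixes q :: "'a \<Rightarrow> real"
  assumes "tame q"
  shows "integrable lborel (\<lambda>y. wt x y * q y)"
  using int_tame[OF assms, of x] by simp

definition I :: "('a \<Rightarrow> real) \<Rightarrow> 'a \<Rightarrow> real" where
  "I p x = (\<integral>y. wt x y * p y \<partial>lborel)"

end

context zp begin

lemma Dk_bound:
  fixes p :: "'a \<Rightarrow> real"
  assumes "a \<ge> 0" "\<And>y. \<bar>p y\<bar> \<le> C * exp (a * norm y)" "norm z \<le> R"
  shows "norm (((wt z y * p y) / s) *\<^sub>R (y - z))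
     \<le> (C * (1 + R) / s * gauss_density s (0::'a) 0 * exp ((a + 1) * R + (a + 1)\<^sup>2 * s / 2)) * mu y"
proof -
  have C0: "C \<ge> 0" using assms(2)[of y] by (smt (verit) exp_gt_zero zero_le_mult_iff)
  have R0: "R \<ge> 0" using assms(3) norm_ge_zero order_trans by blast
  have w0: "wt z y > 0" by (rule wt_pos)
  have "norm (((wt z y * p y) / s) *\<^sub>R (y - z)) = wt z y * \<bar>p y\<bar> * norm (y - z) / s"
    using w0 lam_pos del_pos by (simp add: abs_mult)
  also have "\<dots> \<le> wt z y * (C * exp (a * norm y)) * ((1 + R) * exp (norm y)) / s"
    using w0 s_pos C0 R0
    by (intro divide_right_mono mult_mono mult_left_mono assms(2) norm_diff_le_exp assms(3)) auto
  also have "\<dots> = C * (1 + R) / s * (wt z y * exp ((a + 1) * norm y))"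
    by (simp add: algebra_simps exp_add)
  also have "\<dots> \<le> C * (1 + R) / s * (gauss_density s (0::'a) 0 * exp ((a + 1) * R + (a + 1)\<^sup>2 * s / 2) * mu y)"
    using C0 R0 s_pos assms(1) by (intro mult_left_mono tame_wt_bound assms(3)) auto
  finally show ?thesis by (simp only: mult_ac)
qed

lemma I_deriv:
  assumes tp: "tame p"
  shows "(I p has_derivative (\<lambda>h. (I (\<lambda>y. p y * (y \<bullet> h)) x - (x \<bullet> h) * I p x) / s)) (at x)"
proof -
  from tp obtain C a where Ca: "a \<ge> 0" "\<And>y. norm (p y) \<le> C * exp (a * norm y)" and cp: "continuous_on UNIV p"
    unfolding tame_def by auto
  define K where "K = C * (1 + (norm x + 1)) / s * gauss_density s (0::'a) 0 * exp ((a + 1) * (norm x + 1) + (a + 1)\<^sup>2 * s / 2)"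
  define Dk where "Dk z y = ((wt z y * p y) / s) *\<^sub>R (y - z)" for z y
  have tq: "tame (\<lambda>y. ((1/s) * p y) *\<^sub>R (y - x))"
    by (intro tame_mult_lin tame_scale tp)
  have intDk: "integrable lborel (Dk x)"
    using int_tame[OF tq, of x] unfolding Dk_def by (simp add: algebra_simps)
  have D: "((\<lambda>z. \<integral>y. wt z y * p y \<partial>lborel) has_derivative (\<lambda>h. (\<integral>y. Dk x y \<partial>lborel) \<bullet> h)) (at x)"
  proof (rule deriv_under_int[where w = "\<lambda>y. K * mu y"])
    show "integrable lborel (\<lambda>y. wt z y * p y)" for z by (rule int_tame_real[OF tp])
    show "Dk x \<in> borel_measurable lborel"
      using intDk by (rule borel_measurable_integrable)
    show "integrable lborel (\<lambda>y. K * mu y)" using int_mu' by simp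
    show "((\<lambda>z. wt z y * p y) has_derivative (\<lambda>h. Dk z y \<bullet> h)) (at z)" for z y
    proof -
      from has_derivative_mult_left[OF gauss_deriv[OF s_pos, of y z], of "mu y * p y"]
      have "((\<lambda>z. gauss_density s z y * (mu y * p y)) has_derivative
           (\<lambda>h. ((gauss_density s z y / s) *\<^sub>R (y - z)) \<bullet> h * (mu y * p y))) (at z)" .
      moreover have "(\<lambda>h. ((gauss_density s z y / s) *\<^sub>R (y - z)) \<bullet> h * (mu y * p y)) = (\<lambda>h. Dk z y \<bullet> h)"
        unfolding Dk_def wt_def by (simp add: algebra_simps)
      ultimately show ?thesis unfolding wt_def by (simp add: mult.assoc)
    qed
    show "norm (Dk z y) \<le> K * mu y" if "z \<in> cball x 1" for z y
    proof -
      have "norm z \<le> norm x + 1" using that norm_triangle_ineq2[of z x]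
        by (simp add: dist_norm norm_minus_commute)
      from Dk_bound[OF Ca(1) _ this, of p C y] Ca(2)
      show ?thesis unfolding Dk_def K_def by simp
    qed
  qed
  have "(\<integral>y. Dk x y \<partial>lborel) \<bullet> h = (I (\<lambda>y. p y * (y \<bullet> h)) x - (x \<bullet> h) * I p x) / s" for h
  proof -
    have i1: "integrable lborel (\<lambda>y. wt x y * (p y * (y \<bullet> h)))"
      by (intro int_tame_real tame_mult_inner tp)
    have i2: "integrable lborel (\<lambda>y. wt x y * p y)" by (rule int_tame_real[OF tp])
    have "(\<integral>y. Dk x y \<partial>lborel) \<bullet> h = (\<integral>y. Dk x y \<bullet> h \<partial>lborel)"
      using intDk by simp
    also have "\<dots> = (\<integral>y. (wt x y * (p y * (y \<bullet> h)) - (x \<bullet> h) * (wt x y * p y)) / s \<partial>lborel)"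
      unfolding Dk_def by (intro Bochner_Integration.integral_cong) (auto simp: algebra_simps inner_diff_left diff_divide_distrib)
    also have "\<dots> = ((\<integral>y. wt x y * (p y * (y \<bullet> h)) \<partial>lborel) - (x \<bullet> h) * (\<integral>y. wt x y * p y \<partial>lborel)) / s"
      using i1 i2 by simp
    finally show ?thesis unfolding I_def .
  qed
  with D show ?thesis unfolding I_def[abs_def] by simp
qed

end

context zp begin

lemma I_pos:
  assumes tp: "tame p" and nn: "\<And>y. p y \<ge> 0" and ypos: "p ypos > 0"
  shows "I p x > 0"
proof -
  have int: "integrable lborel (\<lambda>y. wt x y * p y)" by (rule int_tame_real[OF tp])
  have nn2: "\<And>y. wt x y * p y \<ge> 0" using wt_pos nn by (simp add: less_imp_le)
  have ge: "I p x \<ge> 0" unfolding I_def using nn2 by (intro integral_nonneg_AE) auto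
  show ?thesis
  proof (rule ccontr)
    assume "\<not> I p x > 0"
    with ge have "I p x = 0" by simp
    then have "AE y in lborel. wt x y * p y = 0"
      unfolding I_def using integral_nonneg_eq_0_iff_AE[OF int] nn2 by simp
    moreover have "continuous_on UNIV (\<lambda>y. wt x y * p y)"
      using tp unfolding tame_def by (intro continuous_intros wt_cont) auto
    ultimately have "wt x ypos * p ypos = 0" using cont_AE_zero by blast
    with wt_pos[of x ypos] ypos show False by simp
  qed
qed

abbreviation Z :: "'a \<Rightarrow> real" where "Z \<equiv> I (\<lambda>_. 1)"

lemma Z_pos: "Z x > 0"
  by (rule I_pos[where ypos=0]) (auto intro: tame_const)

lemma zprox_eq: "zprox lam \<delta> f x = (1 / Z x) *\<^sub>R (\<integral>y. wt x y *\<^sub>R y \<partial>lborel)"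
  unfolding zprox_def I_def wt_def mu_def by simp

lemma zprox_inner: "zprox lam \<delta> f x \<bullet> i = I (\<lambda>y. y \<bullet> i) x / Z x"
proof -
  have "integrable lborel (\<lambda>y. wt x y *\<^sub>R y)" by (rule int_tame[OF tame_id])
  then have "(\<integral>y. (wt x y *\<^sub>R y) \<bullet> i \<partial>lborel) = (\<integral>y. wt x y *\<^sub>R y \<partial>lborel) \<bullet> i"
    by (rule integral_inner_left)
  then have "(\<integral>y. wt x y *\<^sub>R y \<partial>lborel) \<bullet> i = (\<integral>y. wt x y * (y \<bullet> i) \<partial>lborel)"
    by simp
  then show ?thesis unfolding zprox_eq I_def by simp
qed

inductive_set Acl :: "('a \<Rightarrow> real) set" where
  Acl_I: "tame p \<Longrightarrow> I p \<in> Acl"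
| Acl_lin: "(\<lambda>x. x \<bullet> v) \<in> Acl"
| Acl_const: "(\<lambda>x. c) \<in> Acl"
| Acl_invZ: "(\<lambda>x. 1 / Z x) \<in> Acl"
| Acl_add: "g \<in> Acl \<Longrightarrow> h \<in> Acl \<Longrightarrow> (\<lambda>x. g x + h x) \<in> Acl"
| Acl_mult: "g \<in> Acl \<Longrightarrow> h \<in> Acl \<Longrightarrow> (\<lambda>x. g x * h x) \<in> Acl"

lemma Acl_cmult: "g \<in> Acl \<Longrightarrow> (\<lambda>x. c * g x) \<in> Acl"
  using Acl_mult[OF Acl_const] by blast

lemma Acl_diff: "g \<in> Acl \<Longrightarrow> h \<in> Acl \<Longrightarrow> (\<lambda>x. g x - h x) \<in> Acl"
proof -
  assume "g \<in> Acl" "h \<in> Acl"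
  then have "(\<lambda>x. g x + (- 1) * h x) \<in> Acl" by (intro Acl_add Acl_cmult)
  then show ?thesis by simp
qed

lemma I_deriv_Acl:
  assumes "tame p"
  shows "(\<lambda>x. (I (\<lambda>y. p y * (y \<bullet> v)) x - (x \<bullet> v) * I p x) / s) \<in> Acl"
proof -
  have "(\<lambda>x. (1 / s) * (I (\<lambda>y. p y * (y \<bullet> v)) x - (x \<bullet> v) * I p x)) \<in> Acl"
    by (intro Acl_cmult Acl_diff Acl_mult Acl_I Acl_lin tame_mult_inner assms)
  then show ?thesis by simp
qed

lemma Acl_deriv:
  assumes "g \<in> Acl"
  shows "\<exists>D. (\<forall>x. (g has_derivative D x) (at x)) \<and> (\<forall>v. (\<lambda>x. D x v) \<in> Acl)"
  using assms
proof induction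
  case (Acl_I p)
  show ?case
    by (rule exI[of _ "\<lambda>x h. (I (\<lambda>y. p y * (y \<bullet> h)) x - (x \<bullet> h) * I p x) / s"])
       (use I_deriv[OF Acl_I] I_deriv_Acl[OF Acl_I] in auto)
next
  case (Acl_lin v)
  have "((\<lambda>x. x \<bullet> v) has_derivative (\<lambda>h. h \<bullet> v)) (at x)" for x
    by (auto intro!: derivative_eq_intros)
  moreover have "(\<lambda>x. v' \<bullet> v) \<in> Acl" for v' by (rule Acl_const)
  ultimately show ?case by (intro exI[of _ "\<lambda>x h. h \<bullet> v"]) auto
next
  case (Acl_const c)
  have "((\<lambda>x. c) has_derivative (\<lambda>h. 0)) (at x)" for x by simp
  moreover have "(\<lambda>x. 0) \<in> Acl" by (rule Acl_const)
  ultimately show ?case by (intro exI[of _ "\<lambda>x h. 0"]) auto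
next
  case Acl_invZ
  define Z' where "Z' x h = (I (\<lambda>y. 1 * (y \<bullet> h)) x - (x \<bullet> h) * Z x) / s" for x h
  have dZ: "(Z has_derivative Z' x) (at x)" for x
    unfolding Z'_def by (rule I_deriv[OF tame_const])
  have "((\<lambda>x. 1 / Z x) has_derivative (\<lambda>h. - 1 * (inverse (Z x) * Z' x h * inverse (Z x)) + 0 / Z x)) (at x)" for x
    using Z_pos[of x] by (intro has_derivative_divide dZ has_derivative_const) auto
  moreover have "(\<lambda>x. - 1 * (inverse (Z x) * Z' x v * inverse (Z x)) + 0 / Z x) \<in> Acl" for v
  proof -
    have "(\<lambda>x. (- 1) * ((1 / Z x) * (Z' x v * (1 / Z x)))) \<in> Acl"
      unfolding Z'_def by (intro Acl_cmult Acl_mult Acl.Acl_invZ I_deriv_Acl tame_const)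
    then show ?thesis by (simp add: divide_inverse mult_ac)
  qed
  ultimately show ?case by (intro exI[of _ "\<lambda>x h. - 1 * (inverse (Z x) * Z' x h * inverse (Z x)) + 0 / Z x"]) auto
next
  case (Acl_add g h)
  then obtain Dg Dh where g: "\<forall>x. (g has_derivative Dg x) (at x)" "\<forall>v. (\<lambda>x. Dg x v) \<in> Acl"
    and h: "\<forall>x. (h has_derivative Dh x) (at x)" "\<forall>v. (\<lambda>x. Dh x v) \<in> Acl" by blast
  have "((\<lambda>x. g x + h x) has_derivative (\<lambda>v. Dg x v + Dh x v)) (at x)" for x
    using g(1) h(1) by (intro has_derivative_add) auto
  moreover have "(\<lambda>x. Dg x v + Dh x v) \<in> Acl" for v using g(2) h(2) by (intro Acl.Acl_add) auto
  ultimately show ?case by (intro exI[of _ "\<lambda>x v. Dg x v + Dh x v"]) auto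
next
  case (Acl_mult g h)
  then obtain Dg Dh where g: "\<forall>x. (g has_derivative Dg x) (at x)" "\<forall>v. (\<lambda>x. Dg x v) \<in> Acl"
    and h: "\<forall>x. (h has_derivative Dh x) (at x)" "\<forall>v. (\<lambda>x. Dh x v) \<in> Acl" by blast
  have "((\<lambda>x. g x * h x) has_derivative (\<lambda>v. g x * Dh x v + Dg x v * h x)) (at x)" for x
    using g(1) h(1) by (intro has_derivative_mult) auto
  moreover have "(\<lambda>x. g x * Dh x v + Dg x v * h x) \<in> Acl" for v
    using g(2) h(2) Acl_mult.hyps by (intro Acl.Acl_add Acl.Acl_mult) auto
  ultimately show ?case by (intro exI[of _ "\<lambda>x v. g x * Dh x v + Dg x v * h x"]) auto
qed

end

context zp begin

lemma V_deriv:
  fixes g :: "'a \<Rightarrow> 'a"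
  assumes "\<forall>i\<in>Basis. (\<lambda>x. g x \<bullet> i) \<in> Acl"
  shows "\<exists>Dg. (\<forall>x. (g has_derivative Dg x) (at x)) \<and> (\<forall>v. \<forall>i\<in>Basis. (\<lambda>x. Dg x v \<bullet> i) \<in> Acl)"
proof -
  have "\<forall>i\<in>Basis. \<exists>D. (\<forall>x. ((\<lambda>x. g x \<bullet> i) has_derivative D x) (at x)) \<and> (\<forall>v. (\<lambda>x. D x v) \<in> Acl)"
    using assms Acl_deriv by blast
  then obtain DD where DD: "\<And>i. i \<in> Basis \<Longrightarrow> (\<forall>x. ((\<lambda>x. g x \<bullet> i) has_derivative DD i x) (at x)) \<and> (\<forall>v. (\<lambda>x. DD i x v) \<in> Acl)"
    by metis
  define Dg where "Dg x h = (\<Sum>i\<in>Basis. DD i x h *\<^sub>R i)" for x h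
  have geq: "g = (\<lambda>x. \<Sum>i\<in>Basis. (g x \<bullet> i) *\<^sub>R i)"
    by (simp add: euclidean_representation)
  have "(g has_derivative Dg x) (at x)" for x
  proof -
    have "((\<lambda>x. \<Sum>i\<in>Basis. (g x \<bullet> i) *\<^sub>R i) has_derivative (\<lambda>h. \<Sum>i\<in>Basis. DD i x h *\<^sub>R i)) (at x)"
      using DD by (intro has_derivative_sum has_derivative_scaleR_left) auto
    then show ?thesis unfolding Dg_def by (subst geq) simp
  qed
  moreover have "(\<lambda>x. Dg x v \<bullet> j) \<in> Acl" if j: "j \<in> Basis" for v j
  proof -
    have "Dg x v \<bullet> j = DD j x v" for x
      unfolding Dg_def using j by (simp add: inner_sum_left inner_Basis if_distrib sum.delta cong: if_cong)
    then show ?thesis using DD[OF j] by simp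
  qed
  ultimately show ?thesis by blast
qed

lemma zprox_Cinf: "C_infinity (zprox lam \<delta> f)"
proof -
  define V where "V = {g :: 'a \<Rightarrow> 'a. \<forall>i\<in>Basis. (\<lambda>x. g x \<bullet> i) \<in> Acl}"
  have z: "zprox lam \<delta> f \<in> V"
    unfolding V_def
  proof (intro CollectI ballI)
    fix i :: 'a assume "i \<in> Basis"
    have "(\<lambda>x. (1 / Z x) * I (\<lambda>y. y \<bullet> i) x) \<in> Acl"
      by (intro Acl_mult Acl_invZ Acl_I tame_inner tame_id)
    then show "(\<lambda>x. zprox lam \<delta> f x \<bullet> i) \<in> Acl" unfolding zprox_inner by simp
  qed
  have stepV: "(\<forall>x. g differentiable (at x)) \<and> (\<forall>v. (\<lambda>x. frechet_derivative g (at x) v) \<in> V)"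
    if "g \<in> V" for g
  proof -
    from V_deriv[of g] that obtain Dg where Dg: "\<forall>x. (g has_derivative Dg x) (at x)"
      "\<forall>v. \<forall>i\<in>Basis. (\<lambda>x. Dg x v \<bullet> i) \<in> Acl" unfolding V_def by blast
    have fd: "frechet_derivative g (at x) = Dg x" for x using Dg(1) frechet_derivative_at by metis
    show ?thesis using Dg unfolding fd differentiable_def V_def by blast
  qed
  have "g \<in> V" if "g \<in> iter_derivs (zprox lam \<delta> f)" for g
    using that
  proof induction
    case base then show ?case by (rule z)
  next
    case (step g v) then show ?case using stepV by blast
  qed
  then show ?thesis unfolding C_infinity_def using stepV by blast
qed

end

context zp begin

lemma I_lin3:
  assumes "tame p" "tame q" "tame r"
  shows "I (\<lambda>y. p y - a * q y + b * r y) x = I p x - a * I q x + b * I r x"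
proof -
  have i: "integrable lborel (\<lambda>y. wt x y * p y)" "integrable lborel (\<lambda>y. wt x y * q y)"
      "integrable lborel (\<lambda>y. wt x y * r y)" using int_tame_real assms by auto
  have "I (\<lambda>y. p y - a * q y + b * r y) x = (\<integral>y. wt x y * p y - a * (wt x y * q y) + b * (wt x y * r y) \<partial>lborel)"
    unfolding I_def by (intro Bochner_Integration.integral_cong) (auto simp: algebra_simps)
  also have "\<dots> = I p x - a * I q x + b * I r x"
    unfolding I_def using i by simp
  finally show ?thesis .
qed

lemma var_pos:
  assumes u: "u \<noteq> 0"
  shows "I (\<lambda>y. (y \<bullet> u) * (y \<bullet> u)) x * Z x > (I (\<lambda>y. y \<bullet> u) x)\<^sup>2"
proof -
  define N where "N = I (\<lambda>y. y \<bullet> u) x"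
  define m where "m = N / Z x"
  define c where "c = (m / (u \<bullet> u)) *\<^sub>R u"
  have uu: "u \<bullet> u > 0" using u by simp
  have cu: "c \<bullet> u = m" unfolding c_def using uu by simp
  define q where "q y = ((y - c) \<bullet> u) * ((y - c) \<bullet> u)" for y
  have tp: "tame (\<lambda>y. (y - c) \<bullet> u)"
    using tame_inner[OF tame_mult_lin[OF tame_const[of 1], of c], of u] by simp
  have tq: "tame q"
    using tame_inner[OF tame_mult_lin[OF tp, of c], of u] unfolding q_def by simp
  have qpos: "I q x > 0"
  proof (rule I_pos[OF tq, where ypos = "c + u"])
    show "q y \<ge> 0" for y unfolding q_def by simp
    show "q (c + u) > 0" unfolding q_def using uu by simp
  qed
  have qeq: "q y = (y \<bullet> u) * (y \<bullet> u) - (2 * m) * (y \<bullet> u) + m\<^sup>2 * 1" for y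
    unfolding q_def using cu by (simp add: inner_diff_left algebra_simps power2_eq_square)
  have "I q x = I (\<lambda>y. (y \<bullet> u) * (y \<bullet> u)) x - (2 * m) * N + m\<^sup>2 * Z x"
    unfolding qeq N_def
    by (rule I_lin3) (auto intro: tame_mult_inner[OF tame_inner[OF tame_id]] tame_inner tame_id tame_const)
  also have "\<dots> = I (\<lambda>y. (y \<bullet> u) * (y \<bullet> u)) x - N\<^sup>2 / Z x"
    unfolding m_def using Z_pos[of x] by (simp add: field_simps power2_eq_square)
  finally have "I (\<lambda>y. (y \<bullet> u) * (y \<bullet> u)) x - N\<^sup>2 / Z x > 0" using qpos by simp
  then show ?thesis unfolding N_def using Z_pos[of x] by (simp add: field_simps)
qed

end

lemma line_deriv:
  fixes g :: "'a::real_normed_vector \<Rightarrow> real"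
  assumes "(g has_derivative G) (at (b + t *\<^sub>R u))"
  shows "((\<lambda>t. g (b + t *\<^sub>R u)) has_field_derivative G u) (at t)"
proof -
  have l: "((\<lambda>t. b + t *\<^sub>R u) has_derivative (\<lambda>h. h *\<^sub>R u)) (at t)"
    by (auto intro!: derivative_eq_intros)
  from has_derivative_compose[OF l assms]
  have "((\<lambda>t. g (b + t *\<^sub>R u)) has_derivative (\<lambda>h. G (h *\<^sub>R u))) (at t)" by (simp add: o_def)
  moreover have "linear G" using assms has_derivative_linear by blast
  then have "(\<lambda>h. G (h *\<^sub>R u)) = (\<lambda>h. G u * h)" by (auto simp: linear_cmul)
  ultimately show ?thesis unfolding has_field_derivative_def by simp
qed

context zp begin

lemma zprox_dir_deriv:
  "((\<lambda>x. zprox lam \<delta> f x \<bullet> u) has_derivative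
     (\<lambda>h. - I (\<lambda>y. y \<bullet> u) x * (inverse (Z x) * ((I (\<lambda>y. 1 * (y \<bullet> h)) x - (x \<bullet> h) * Z x) / s) * inverse (Z x))
          + ((I (\<lambda>y. (y \<bullet> u) * (y \<bullet> h)) x - (x \<bullet> h) * I (\<lambda>y. y \<bullet> u) x) / s) / Z x)) (at x)"
proof -
  have "(\<lambda>x. zprox lam \<delta> f x \<bullet> u) = (\<lambda>x. I (\<lambda>y. y \<bullet> u) x / Z x)"
    by (simp add: zprox_inner)
  moreover have "((\<lambda>x. I (\<lambda>y. y \<bullet> u) x / Z x) has_derivative
     (\<lambda>h. - I (\<lambda>y. y \<bullet> u) x * (inverse (Z x) * ((I (\<lambda>y. 1 * (y \<bullet> h)) x - (x \<bullet> h) * Z x) / s) * inverse (Z x))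
          + ((I (\<lambda>y. (y \<bullet> u) * (y \<bullet> h)) x - (x \<bullet> h) * I (\<lambda>y. y \<bullet> u) x) / s) / Z x)) (at x)"
    using Z_pos[of x]
    by (intro has_derivative_divide I_deriv tame_const tame_inner tame_id) auto
  ultimately show ?thesis by simp
qed

lemma zprox_strict_mono:
  assumes "a \<noteq> b"
  shows "(zprox lam \<delta> f a - zprox lam \<delta> f b) \<bullet> (a - b) > 0"
proof -
  define u where "u = a - b"
  have u: "u \<noteq> 0" using assms unfolding u_def by simp
  define \<phi> where "\<phi> t = zprox lam \<delta> f (b + t *\<^sub>R u) \<bullet> u" for t
  have "\<phi> 0 < \<phi> 1"
  proof (rule DERIV_pos_imp_increasing[of 0 1])
    fix t :: real
    define x where "x = b + t *\<^sub>R u"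
    define N where "N = I (\<lambda>y. y \<bullet> u) x"
    define I2 where "I2 = I (\<lambda>y. (y \<bullet> u) * (y \<bullet> u)) x"
    define G where "G = - N * (inverse (Z x) * ((N - (x \<bullet> u) * Z x) / s) * inverse (Z x))
          + ((I2 - (x \<bullet> u) * N) / s) / Z x"
    have "(\<phi> has_field_derivative G) (at t)"
      using line_deriv[OF zprox_dir_deriv[of u "b + t *\<^sub>R u"]]
      unfolding \<phi>_def G_def N_def I2_def x_def by simp
    moreover have "G = (I2 * Z x - N\<^sup>2) / (s * (Z x)\<^sup>2)"
      unfolding G_def using Z_pos[of x] lam_pos del_pos by (simp add: field_simps power2_eq_square)
    moreover have "(I2 * Z x - N\<^sup>2) / (s * (Z x)\<^sup>2) > 0"
      using var_pos[OF u, of x] Z_pos[of x] s_pos unfolding I2_def N_def by simp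
    ultimately show "\<exists>y. (\<phi> has_field_derivative y) (at t) \<and> 0 < y" by auto
  qed simp
  then show ?thesis unfolding \<phi>_def u_def by (simp add: inner_diff_left)
qed

lemma zprox_inj: "inj (zprox lam \<delta> f)"
proof (rule injI)
  fix a b assume "zprox lam \<delta> f a = zprox lam \<delta> f b"
  then show "a = b" using zprox_strict_mono[of a b] by (cases "a = b") auto
qed

end

context zp begin

definition psi :: "'a \<Rightarrow> real" where "psi x = s * ln (Z x) + (x \<bullet> x) / 2"

lemma psi_deriv: "(psi has_derivative (\<lambda>h. zprox lam \<delta> f x \<bullet> h)) (at x)"
proof -
  define D where "D h = (I (\<lambda>y. 1 * (y \<bullet> h)) x - (x \<bullet> h) * Z x) / s" for h
  have dZ: "(Z has_derivative D) (at x)" unfolding D_def by (rule I_deriv[OF tame_const])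
  have dl: "((\<lambda>x. ln (Z x)) has_derivative (\<lambda>h. D h * inverse (Z x))) (at x)"
    by (rule has_derivative_ln[OF Z_pos dZ])
  have dq: "((\<lambda>x. x \<bullet> x) has_derivative (\<lambda>h. h \<bullet> x + x \<bullet> h)) (at x)"
    by (auto intro!: derivative_eq_intros)
  have "(psi has_derivative (\<lambda>h. s * (D h * inverse (Z x)) + (h \<bullet> x + x \<bullet> h) / 2)) (at x)"
  proof -
    have dq2: "((\<lambda>x. (x \<bullet> x) / 2) has_derivative (\<lambda>h. (h \<bullet> x + x \<bullet> h) / 2)) (at x)"
      using has_derivative_mult_right[OF dq, of "1/2"] by simp
    show ?thesis unfolding psi_def[abs_def]
      by (intro has_derivative_add has_derivative_mult_right dl dq2)
  qed
  moreover have "(\<lambda>h. s * (D h * inverse (Z x)) + (h \<bullet> x + x \<bullet> h) / 2) = (\<lambda>h. zprox lam \<delta> f x \<bullet> h)"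
  proof
    fix h
    show "s * (D h * inverse (Z x)) + (h \<bullet> x + x \<bullet> h) / 2 = zprox lam \<delta> f x \<bullet> h"
      unfolding zprox_inner D_def using Z_pos[of x] lam_pos del_pos
      by (simp add: field_simps inner_commute)
  qed
  ultimately show ?thesis by simp
qed

lemma psi_cont: "continuous_on UNIV psi"
  using psi_deriv has_derivative_continuous continuous_at_imp_continuous_on by blast

end

context zp begin

lemma Z_lower:
  fixes z :: 'a
  obtains K where "K > 0" "\<And>x. x \<noteq> 0 \<Longrightarrow> Z x \<ge> K * exp ((2 * (x \<bullet> z) + norm x - x \<bullet> x) / (2 * s))"
proof -
  obtain ym where ym: "ym \<in> cball z 2" "\<And>y. y \<in> cball z 2 \<Longrightarrow> mu ym \<le> mu y"
    using continuous_attains_inf[OF compact_cball _ continuous_on_subset[OF mu_cont], of z 2] by auto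
  define m0 where "m0 = mu ym"
  have m0: "m0 > 0" unfolding m0_def by (rule mu_pos)
  define Vb where "Vb = measure lborel (ball (0::'a) (1/2))"
  have Vb: "Vb > 0" unfolding Vb_def by (rule content_ball_pos) simp
  define cc where "cc = gauss_density s (0::'a) 0 * m0 * exp (- (norm z + 3/2)\<^sup>2 / (2 * s))"
  have cc: "cc > 0" unfolding cc_def using cg_pos m0 by simp
  define K where "K = cc * Vb"
  have K: "K > 0" unfolding K_def using cc Vb by simp
  have "Z x \<ge> K * exp ((2 * (x \<bullet> z) + norm x - x \<bullet> x) / (2 * s))" if x: "x \<noteq> 0" for x
  proof -
    define E where "E = (2 * (x \<bullet> z) + norm x - x \<bullet> x) / (2 * s)"
    define c where "c = z + (1 / norm x) *\<^sub>R x"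
    define B where "B = ball c (1/2)"
    have nx: "norm x > 0" using x by simp
    have mB: "measure lborel B = Vb"
      unfolding B_def Vb_def using content_ball_conv_unit_ball[of "1/2" c] content_ball_conv_unit_ball[of "1/2" "0::'a"]
      by simp
    define L where "L = cc * exp E"
    have L: "L \<ge> 0" unfolding L_def using cc by simp
    have wB: "wt x y \<ge> L" if y: "y \<in> B" for y
    proof -
      have yc: "norm (y - c) < 1/2" using y unfolding B_def by (simp add: dist_norm norm_minus_commute)
      have cz: "norm (c - z) = 1" unfolding c_def using nx by simp
      have yz: "norm (y - z) \<le> 2"
        using norm_triangle_ineq[of "y - c" "c - z"] yc cz by simp
      then have "y \<in> cball z 2" by (simp add: dist_norm norm_minus_commute)
      then have mu0: "mu y \<ge> m0" unfolding m0_def using ym(2) by blast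
      have ny: "norm y \<le> norm z + 3/2"
        using norm_triangle_ineq[of z "y - z"] yz yc cz norm_triangle_ineq[of "y - c" "c - z"] by simp
      have xy: "2 * (x \<bullet> y) \<ge> 2 * (x \<bullet> z) + norm x"
      proof -
        have "x \<bullet> y = x \<bullet> z + x \<bullet> (c - z) + x \<bullet> (y - c)" by (simp add: inner_diff_right)
        moreover have "x \<bullet> (c - z) = norm x" unfolding c_def using nx
          by (simp add: power2_norm_eq_inner[symmetric] power2_eq_square)
        moreover have "\<bar>x \<bullet> (y - c)\<bar> \<le> norm x * norm (y - c)" by (rule Cauchy_Schwarz_ineq2)
        moreover have "norm x * norm (y - c) \<le> norm x * (1/2)" using yc nx by simp
        ultimately show ?thesis by linarith
      qed
      have yy: "y \<bullet> y \<le> (norm z + 3/2)\<^sup>2"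
        using ny by (simp add: power2_norm_eq_inner[symmetric] power_mono)
      have ex: "- (norm (y - x))\<^sup>2 / (2 * s) \<ge> - (norm z + 3/2)\<^sup>2 / (2 * s) + E"
      proof -
        have "(norm (y - x))\<^sup>2 = y \<bullet> y - 2 * (x \<bullet> y) + x \<bullet> x"
          by (simp add: power2_norm_eq_inner inner_diff_left inner_diff_right inner_commute)
        then have "- (norm (y - x))\<^sup>2 \<ge> - (norm z + 3/2)\<^sup>2 + (2 * (x \<bullet> z) + norm x - x \<bullet> x)"
          using xy yy by linarith
        then have "(- (norm z + 3/2)\<^sup>2 + (2 * (x \<bullet> z) + norm x - x \<bullet> x)) / (2 * s) \<le> (- (norm (y - x))\<^sup>2) / (2 * s)"
          using s_pos by (intro divide_right_mono) auto
        then show ?thesis unfolding E_def by (simp only: add_divide_distrib)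
      qed
      have "L = gauss_density s (0::'a) 0 * exp (- (norm z + 3/2)\<^sup>2 / (2 * s) + E) * m0"
        unfolding L_def cc_def exp_add by (simp only: mult_ac)
      also have "\<dots> \<le> gauss_density s (0::'a) 0 * exp (- (norm (y - x))\<^sup>2 / (2 * s)) * mu y"
        using ex mu0 cg_pos m0 by (intro mult_mono mult_left_mono) auto
      also have "\<dots> = wt x y" unfolding wt_def by (subst gauss_eq[of x y]) simp
      finally show ?thesis .
    qed
    have "(\<integral>y. indicator B y * L \<partial>lborel) \<le> (\<integral>y. wt x y \<partial>lborel)"
    proof (rule integral_mono)
      show "integrable lborel (\<lambda>y. indicator B y * L)"
      proof -
        have "emeasure lborel B < \<infinity>" unfolding B_def by (rule emeasure_lborel_ball_finite)
        then show ?thesis unfolding B_def by (intro integrable_mult_left integrable_real_indicator) auto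
      qed
      show "integrable lborel (wt x)" using int_tame_real[OF tame_const[of 1], of x] by simp
      show "indicator B y * L \<le> wt x y" for y
        using wB[of y] wt_pos[of x y] by (cases "y \<in> B") auto
    qed
    moreover have "(\<integral>y. indicator B y * L \<partial>lborel) = Vb * L"
      using mB by simp
    moreover have "Z x = (\<integral>y. wt x y \<partial>lborel)" unfolding I_def by simp
    ultimately have "Z x \<ge> Vb * L" using mB by simp
    then show ?thesis unfolding K_def L_def E_def by (simp add: mult_ac)
  qed
  with K that show ?thesis by blast
qed

lemma zprox_surj: "surj (zprox lam \<delta> f)"
proof -
  have "z \<in> range (zprox lam \<delta> f)" for z
  proof -
    define \<Phi> where "\<Phi> x = psi x - x \<bullet> z" for x
    have d\<Phi>: "(\<Phi> has_derivative (\<lambda>h. zprox lam \<delta> f x \<bullet> h - h \<bullet> z)) (at x)" for x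
      unfolding \<Phi>_def[abs_def] by (intro has_derivative_diff psi_deriv has_derivative_inner_left has_derivative_ident)
    have c\<Phi>: "continuous_on UNIV \<Phi>"
      using d\<Phi> has_derivative_continuous continuous_at_imp_continuous_on by blast
    obtain K where K: "K > 0" "\<And>x. x \<noteq> 0 \<Longrightarrow> Z x \<ge> K * exp ((2 * (x \<bullet> z) + norm x - x \<bullet> x) / (2 * s))"
      using Z_lower[of z] by blast
    have low: "\<Phi> x \<ge> s * ln K + norm x / 2" if x: "x \<noteq> 0" for x
    proof -
      define E where "E = (2 * (x \<bullet> z) + norm x - x \<bullet> x) / (2 * s)"
      have "ln (K * exp E) \<le> ln (Z x)"
        using K(2)[OF x] K(1) Z_pos[of x] unfolding E_def by (subst ln_le_cancel_iff) auto
      then have "ln K + E \<le> ln (Z x)" using K(1) by (simp add: ln_mult)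
      then have "s * (ln K + E) \<le> s * ln (Z x)" using s_pos by (simp add: mult_left_mono)
      moreover have "s * E = x \<bullet> z + norm x / 2 - (x \<bullet> x) / 2"
        unfolding E_def using lam_pos del_pos by (simp add: field_simps)
      ultimately show ?thesis unfolding \<Phi>_def psi_def by (simp add: distrib_left)
    qed
    define R where "R = max 1 (2 * (\<Phi> 0 - s * ln K) + 1)"
    have far: "\<Phi> x > \<Phi> 0" if "norm x \<ge> R" for x
    proof -
      have "x \<noteq> 0" using that unfolding R_def by auto
      moreover have "2 * (\<Phi> 0 - s * ln K) + 1 \<le> norm x" using that unfolding R_def by simp
      ultimately show ?thesis using low by force
    qed
    obtain xm where xm: "xm \<in> cball 0 R" "\<And>y. y \<in> cball 0 R \<Longrightarrow> \<Phi> xm \<le> \<Phi> y"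
      using continuous_attains_inf[OF compact_cball _ continuous_on_subset[OF c\<Phi>], of 0 R]
      unfolding R_def by auto
    have glob: "\<forall>y\<in>UNIV. \<Phi> xm \<le> \<Phi> y"
    proof
      fix y :: 'a
      have "\<Phi> xm \<le> \<Phi> 0" using xm(2)[of 0] unfolding R_def by simp
      then show "\<Phi> xm \<le> \<Phi> y"
        using xm(2)[of y] far[of y] by (cases "norm y \<le> R") auto
    qed
    have "(\<lambda>h. zprox lam \<delta> f xm \<bullet> h - h \<bullet> z) = (\<lambda>v. 0)"
      by (rule differential_zero_maxmin[OF _ open_UNIV d\<Phi>]) (use glob in auto)
    then have "zprox lam \<delta> f xm \<bullet> (zprox lam \<delta> f xm - z) - (zprox lam \<delta> f xm - z) \<bullet> z = 0"
      by meson
    then have "(zprox lam \<delta> f xm - z) \<bullet> (zprox lam \<delta> f xm - z) = 0"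
      by (simp add: inner_diff_left inner_commute)
    then have "zprox lam \<delta> f xm = z" by simp
    then show ?thesis by blast
  qed
  then show ?thesis by blast
qed

end

context zp begin

lemma bregman:
  assumes "w \<noteq> x"
  shows "psi w + zprox lam \<delta> f w \<bullet> (x - w) < psi x"
proof -
  define u where "u = x - w"
  have u: "u \<noteq> 0" using assms unfolding u_def by simp
  define c where "c = zprox lam \<delta> f w \<bullet> u"
  define h where "h t = psi (w + t *\<^sub>R u) - t * c" for t
  have dh: "(h has_field_derivative (zprox lam \<delta> f (w + t *\<^sub>R u) \<bullet> u - c)) (at t)" for t
  proof -
    have "((\<lambda>t. psi (w + t *\<^sub>R u)) has_field_derivative zprox lam \<delta> f (w + t *\<^sub>R u) \<bullet> u) (at t)"
      by (rule line_deriv[OF psi_deriv])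
    then show ?thesis unfolding h_def[abs_def]
      by (auto intro!: derivative_eq_intros)
  qed
  have "h 0 < h 1"
  proof (rule DERIV_pos_imp_increasing_open[of 0 1])
    show "continuous_on {0..1} h"
      using dh by (meson DERIV_isCont continuous_at_imp_continuous_on)
    fix t :: real assume t: "0 < t" "t < 1"
    have "w + t *\<^sub>R u \<noteq> w" using t u by simp
    from zprox_strict_mono[OF this]
    have "t * ((zprox lam \<delta> f (w + t *\<^sub>R u) - zprox lam \<delta> f w) \<bullet> u) > 0" by simp
    then have "(zprox lam \<delta> f (w + t *\<^sub>R u) - zprox lam \<delta> f w) \<bullet> u > 0"
      using t by (simp add: zero_less_mult_iff)
    then have "zprox lam \<delta> f (w + t *\<^sub>R u) \<bullet> u - c > 0" unfolding c_def by (simp add: inner_diff_left)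
    with dh show "\<exists>y. (h has_field_derivative y) (at t) \<and> 0 < y" by blast
  qed simp
  then show ?thesis unfolding h_def c_def u_def by simp
qed

lemma zprox_bij: "bij (zprox lam \<delta> f)"
  using zprox_inj zprox_surj by (simp add: bij_def)

lemma soft_moreau_eq: "soft_moreau lam \<delta> f w = - \<delta> * ln (Z w)"
  unfolding soft_moreau_def I_def wt_def mu_def by simp

lemma obj_eq:
  fixes x y :: 'a
  defines "w \<equiv> inv (zprox lam \<delta> f) y"
  shows "s * H_fun lam \<delta> f y + (norm (y - x))\<^sup>2 / 2 = (w - x) \<bullet> zprox lam \<delta> f w - psi w + (x \<bullet> x) / 2"
proof -
  have yw: "zprox lam \<delta> f w = y" unfolding w_def using zprox_surj by (simp add: surj_f_inv_f)
  have "s * H_fun lam \<delta> f y = - (norm (w - y))\<^sup>2 / 2 - s * ln (Z w)"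
    unfolding H_fun_def soft_moreau_eq w_def[symmetric] using lam_pos del_pos
    by (simp add: field_simps)
  then show ?thesis unfolding yw psi_def
    by (simp add: power2_norm_eq_inner inner_diff_left inner_diff_right inner_commute field_simps)
qed

lemma prox_zprox: "prox_set (H_fun lam \<delta> f) s x = {zprox lam \<delta> f x}"
proof -
  define obj where "obj y = s * H_fun lam \<delta> f y + (norm (y - x))\<^sup>2 / 2" for y
  have ix: "inv (zprox lam \<delta> f) (zprox lam \<delta> f x) = x" by (rule inv_f_f[OF zprox_inj])
  have objz: "obj (zprox lam \<delta> f x) = - psi x + (x \<bullet> x) / 2"
    unfolding obj_def obj_eq ix by simp
  have gt: "obj y > obj (zprox lam \<delta> f x)" if "y \<noteq> zprox lam \<delta> f x" for y
  proof -
    define w where "w = inv (zprox lam \<delta> f) y"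
    have yw: "zprox lam \<delta> f w = y" unfolding w_def using zprox_surj by (simp add: surj_f_inv_f)
    have "w \<noteq> x" using that yw by auto
    from bregman[OF this] have "psi w + zprox lam \<delta> f w \<bullet> (x - w) < psi x" .
    moreover have "obj y = (w - x) \<bullet> zprox lam \<delta> f w - psi w + (x \<bullet> x) / 2"
      unfolding obj_def obj_eq w_def ..
    ultimately show ?thesis unfolding objz by (simp add: inner_diff_left inner_diff_right inner_commute)
  qed
  show ?thesis
  proof
    show "prox_set (H_fun lam \<delta> f) s x \<subseteq> {zprox lam \<delta> f x}"
    proof
      fix p assume "p \<in> prox_set (H_fun lam \<delta> f) s x"
      then have "obj p \<le> obj (zprox lam \<delta> f x)" unfolding prox_set_def obj_def by blast
      then show "p \<in> {zprox lam \<delta> f x}" using gt[of p] by force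
    qed
    show "{zprox lam \<delta> f x} \<subseteq> prox_set (H_fun lam \<delta> f) s x"
      unfolding prox_set_def
    proof (clarify)
      fix y
      show "s * H_fun lam \<delta> f (zprox lam \<delta> f x) + (norm (zprox lam \<delta> f x - x))\<^sup>2 / 2
            \<le> s * H_fun lam \<delta> f y + (norm (y - x))\<^sup>2 / 2"
        using gt[of y] unfolding obj_def by (cases "y = zprox lam \<delta> f x") auto
    qed
  qed
qed

end

theorem theorem1:
  fixes f :: "'a::euclidean_space \<Rightarrow> real" and lam \<delta> :: real
  assumes "lam > 0" and "\<delta> > 0"
    and A1_cont: "continuous_on UNIV f"
    and A1_min: "\<exists>x0. \<forall>y. f x0 \<le> f y"
    and A2: "integrable lborel (\<lambda>y. exp (- f y / \<delta>))"
  shows "C_infinity (zprox lam \<delta> f)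
    \<and> bij (zprox lam \<delta> f)
    \<and> (\<forall>x. prox_set (H_fun lam \<delta> f) (lam * \<delta>) x = {zprox lam \<delta> f x})
    \<and> (\<forall>xs :: nat \<Rightarrow> 'a. (\<forall>k. xs (Suc k) = zprox lam \<delta> f (xs k)) \<longrightarrow>
          (\<forall>k. prox_set (H_fun lam \<delta> f) (lam * \<delta>) (xs k) = {xs (Suc k)}))"
proof -
  interpret zp f lam \<delta>
    using assms by unfold_locales auto
  show ?thesis using zprox_Cinf zprox_bij prox_zprox by auto
qed

end
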